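(* Let $s\ge 1$, $i$ and $j'$ be integers with $s\le i\le 2s$ and $0\le j'\le s$. Then $$\sum_{t=0}^{2s-i}\frac{(-1)^t}{2s-t}\binom{2s-i}{t}\binom{2s-t-1-j'}{s-j'}=\frac{(-1)^{s+i+j'}}{i}\binom{s}{j'}\binom{2s}{i}^{-1}+\sum_{t=1}^{s-j'}\frac{(-1)^{t+1}}{t}\binom{i-j'-1}{s+t-1}\binom{s}{t-1}\binom{s-j'}{t}^{-1}.$$
   Context: For an integer $b\ge 0$ and any integer $a$, $\binom{a}{b}=a(a-1)\cdots(a-b+1)/b!$; in particular $\binom{a}{b}=0$ when $0\le a<b$. An empty sum is $0$. *)

theory Defs
  imports Complex_Main
begin

end

theory Submission
  imports Defs
begin


fun D :: "nat \<Rightarrow> (real \<Rightarrow> real) \<Rightarrow> real \<Rightarrow> real" where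
  "D 0 f x = f x"
| "D (Suc n) f x = D n f x - D n f (x - 1)"

lemma D_sum: "D n f x = (\<Sum>t\<le>n. (-1)^t * real (n choose t) * f (x - real t))"
proof (induction n arbitrary: x)
  case 0 then show ?case by simp
next
  case (Suc n)
  have A: "(\<Sum>t\<le>Suc n. (-1)^t * real (Suc n choose t) * f (x - real t))
     = f x + (\<Sum>t\<le>n. (-1)^(Suc t) * real (n choose t) * f (x - 1 - real t))
           + (\<Sum>t\<le>n. (-1)^(Suc t) * real (n choose Suc t) * f (x - real (Suc t)))"
    apply (subst sum.atMost_Suc_shift)
    apply (simp add: sum.distrib[symmetric] del: sum.distrib)
    apply (rule sum.cong, simp)
    apply (simp add: algebra_simps)
    done
  have B: "f x + (\<Sum>t\<le>n. (-1)^(Suc t) * real (n choose Suc t) * f (x - real (Suc t)))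
        = (\<Sum>t\<le>Suc n. (-1)^t * real (n choose t) * f (x - real t))"
    by (subst sum.atMost_Suc_shift) simp
  also have "\<dots> = (\<Sum>t\<le>n. (-1)^t * real (n choose t) * f (x - real t))"
    by simp
  finally have B': "f x + (\<Sum>t\<le>n. (-1)^(Suc t) * real (n choose Suc t) * f (x - real (Suc t)))
        = (\<Sum>t\<le>n. (-1)^t * real (n choose t) * f (x - real t))" .
  have C: "(\<Sum>t\<le>n. (-1)^(Suc t) * real (n choose t) * f (x - 1 - real t))
     = - (\<Sum>t\<le>n. (-1)^t * real (n choose t) * f (x - 1 - real t))"
    by (simp add: sum_negf[symmetric])
  show ?case using A B' C Suc.IH[of x] Suc.IH[of "x-1"] by (simp add: algebra_simps)
qed

lemma D_lin: "D n (\<lambda>y. \<Sum>u\<in>A. c u * g u y) x = (\<Sum>u\<in>A. c u * D n (g u) x)"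
  by (induction n arbitrary: x) (simp_all add: sum_subtractf right_diff_distrib)

lemma D_gchoose: "D n (\<lambda>y. (y - c) gchoose r) x = (if n \<le> r then (x - c - real n) gchoose (r - n) else 0)"
proof (induction n arbitrary: x)
  case 0 then show ?case by simp
next
  case (Suc n)
  show ?case
  proof (cases "Suc n \<le> r")
    case True
    then obtain k where k: "r - n = Suc k" and k2: "r - Suc n = k" by (metis Suc_diff_le diff_Suc_Suc diff_diff_cancel diff_le_self le_SucE)
    have "(x - 1 - c - real n + 1) gchoose (Suc k) = ((x - 1 - c - real n) gchoose k) + ((x - 1 - c - real n) gchoose (Suc k))"
      by (rule gbinomial_Suc_Suc)
    then show ?thesis using True k k2 Suc.IH[of x] Suc.IH[of "x-1"] by (simp add: algebra_simps)
  next
    case False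
    then show ?thesis using Suc.IH[of x] Suc.IH[of "x-1"] by auto
  qed
qed

lemma D_inv: "(\<forall>k\<le>n. x \<noteq> real k) \<Longrightarrow> D n (\<lambda>y. 1 / y) x = (-1)^n * fact n / (\<Prod>k\<le>n. (x - real k))"
proof (induction n arbitrary: x)
  case 0 then show ?case by simp
next
  case (Suc n)
  have h1: "\<forall>k\<le>n. x \<noteq> real k" using Suc.prems by auto
  have h2: "\<forall>k\<le>n. x - 1 \<noteq> real k" using Suc.prems by (metis Suc_le_mono diff_eq_eq of_nat_Suc add.commute)
  have P1: "(\<Prod>k\<le>Suc n. (x - real k)) = (\<Prod>k\<le>n. (x - real k)) * (x - real (Suc n))" by simp
  have P2: "(\<Prod>k\<le>Suc n. (x - real k)) = x * (\<Prod>k\<le>n. (x - 1 - real k))"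
    by (subst prod.atMost_Suc_shift) (simp add: algebra_simps)
  have nz1: "(\<Prod>k\<le>n. (x - real k)) \<noteq> 0" using h1 by simp
  have nz2: "(\<Prod>k\<le>n. (x - 1 - real k)) \<noteq> 0" using h2 by simp
  have nz3: "x \<noteq> 0" using Suc.prems by force
  have nz4: "x - real (Suc n) \<noteq> 0" using Suc.prems by force
  define P where "P = (\<Prod>k\<le>n. (x - real k))"
  define Q where "Q = (\<Prod>k\<le>n. (x - 1 - real k))"
  define R where "R = (\<Prod>k\<le>Suc n. (x - real k))"
  have RP: "R = P * (x - real (Suc n))" using P1 unfolding R_def P_def .
  have RQ: "R = x * Q" using P2 unfolding R_def Q_def .
  have nzR: "R \<noteq> 0" using RP nz1 nz4 P_def by simp
  have e1: "1 / P = (x - real (Suc n)) / R" using RP nz4 nz1 nzR unfolding P_def by (simp add: field_simps)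
  have e2: "1 / Q = x / R" using RQ nz3 by (simp add: field_simps)
  have "D (Suc n) (\<lambda>y. 1 / y) x = (-1)^n * fact n * (1 / P - 1 / Q)"
    unfolding D.simps Suc.IH[OF h1] Suc.IH[OF h2] P_def Q_def by (simp add: field_simps)
  also have "\<dots> = (-1)^n * fact n * (- real (Suc n) / R)" unfolding e1 e2 using nzR by (simp add: diff_divide_distrib[symmetric] algebra_simps)
  also have "\<dots> = (-1)^(Suc n) * fact (Suc n) / R" by (simp add: field_simps)
  finally show ?case unfolding R_def .
qed

lemma prod_fact: "n < N \<Longrightarrow> (\<Prod>k\<le>n. (real N - real k)) = fact N / fact (N - Suc n)"
proof (induction n)
  case 0 then show ?case by (cases N) (auto simp: field_simps)
next
  case (Suc n)
  have e: "fact (N - Suc n) = real (N - Suc n) * fact (N - Suc (Suc n))"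
    using Suc.prems by (metis Suc_diff_Suc fact_Suc of_nat_Suc Suc_lessD diff_Suc_Suc)
  have r: "real (N - Suc n) = real N - real (Suc n)" using Suc.prems by simp
  have p: "real (N - Suc n) > 0" using Suc.prems by simp
  have "(\<Prod>k\<le>Suc n. (real N - real k)) = fact N / fact (N - Suc n) * real (N - Suc n)"
    using Suc r by simp
  also have "\<dots> = fact N / fact (N - Suc (Suc n))" proof -
    have g: "fact N / (a * b) * a = fact N / b" if "a \<noteq> 0" for a b :: real using that by simp
    show ?thesis unfolding e by (rule g) (use p in simp)
  qed
  finally show ?case .
qed



definition S :: "nat \<Rightarrow> nat \<Rightarrow> real \<Rightarrow> real" where
  "S j m z = (\<Sum>u<m. (-1)^(m-u+1) * fact u / fact (u+j+1) * (z gchoose u))"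

lemma S_Suc: "S j (Suc m) z = - S j m z + fact m / fact (m+j+1) * (z gchoose m)"
proof -
  have "S j (Suc m) z = (\<Sum>u<m. (-1)^(Suc m-u+1) * fact u / fact (u+j+1) * (z gchoose u))
        + fact m / fact (m+j+1) * (z gchoose m)"
    unfolding S_def by simp
  also have "(\<Sum>u<m. (-1)^(Suc m-u+1) * fact u / fact (u+j+1) * (z gchoose u)) = - S j m z"
    unfolding S_def sum_negf[symmetric]
    by (rule sum.cong) (auto simp: Suc_diff_le)
  finally show ?thesis by simp
qed

lemma PL: "(z + real j + 1) * S j m z = fact m / fact (m+j) * (z gchoose m) - (-1)^m / fact j"
proof (induction m)
  case 0 then show ?case by (simp add: S_def)
next
  case (Suc m)
  have g: "real (Suc m) * (z gchoose Suc m) = (z - real m) * (z gchoose m)"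
    using gbinomial_mult_1[of z m] by (simp add: algebra_simps)
  have f1: "fact (Suc m + j) = real (m + j + 1) * (fact (m+j) :: real)"
    by (metis add_Suc fact_Suc of_nat_Suc Suc_eq_plus1)
  have f2: "fact (Suc m) = real (m + 1) * (fact m :: real)" by simp
  have pos: "(fact (m+j) :: real) > 0" by simp
  have "(z + real j + 1) * S j (Suc m) z = - ((z + real j + 1) * S j m z)
        + (z + real j + 1) * fact m / fact (m+j+1) * (z gchoose m)"
    unfolding S_Suc by (simp add: algebra_simps)
  also have "\<dots> = - (fact m / fact (m+j) * (z gchoose m) - (-1)^m / fact j)
        + (z + real j + 1) * fact m / (real (m+j+1) * fact (m+j)) * (z gchoose m)"
    unfolding Suc.IH using f1 by simp
  also have "\<dots> = fact m * (z - real m) * (z gchoose m) / (real (m+j+1) * fact (m+j)) + (-1)^m / fact j"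
  proof -
    have gen: "- (A / F * B - e) + w * A / (c * F) * B = A * (w - c) * B / (c * F) + e"
      if "c \<noteq> 0" "F \<noteq> 0" for A B F e w c :: real
      using that by (simp add: field_simps)
    have "real (m+j+1) \<noteq> 0" by simp
    from gen[OF this, of "fact (m+j)" "fact m" "z gchoose m" "(-1)^m / fact j" "z + real j + 1"] pos
    show ?thesis by (simp add: algebra_simps)
  qed
  also have "\<dots> = fact (Suc m) / fact (Suc m + j) * (z gchoose Suc m) - (-1)^(Suc m) / fact j"
  proof -
    have "fact m * (z - real m) * (z gchoose m) = fact m * real (Suc m) * (z gchoose Suc m)"
      using g by simp
    then show ?thesis unfolding f1 f2 by (simp add: mult.assoc)
  qed
  finally show ?case .
qed



lemma coef:
  assumes "u < m"
  shows "fact (m+j)/fact m * ((-1)^(m-u+1) * fact u / fact (u+j+1))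
       = (-1)^((m-u)+1)/real(m-u) * real((m+j) choose (m-u-1)) / real(m choose (m-u))"
proof -
  obtain t where t: "m - u = Suc t" using assms by (metis Suc_diff_Suc)
  have m: "m = u + Suc t" using t assms by simp
  have b1: "fact t * fact (u+j+1) * real ((m+j) choose t) = fact (m+j)"
  proof -
    have "fact t * fact (m+j-t) * ((m+j) choose t) = (fact (m+j) :: nat)"
      by (rule binomial_fact_lemma) (use m in simp)
    moreover have "m+j-t = u+j+1" using m by simp
    ultimately show ?thesis by (metis of_nat_fact of_nat_mult)
  qed
  have b2: "fact (Suc t) * fact u * real (m choose Suc t) = fact m"
  proof -
    have "fact (Suc t) * fact (m - Suc t) * (m choose Suc t) = (fact m :: nat)"
      by (rule binomial_fact_lemma) (use m in simp)
    moreover have "m - Suc t = u" using m by simp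
    ultimately show ?thesis by (metis of_nat_fact of_nat_mult)
  qed
  have nz: "real (m choose Suc t) \<noteq> 0" using m by (simp del: binomial_Suc_Suc)
  have nz2: "(fact t :: real) \<noteq> 0" "(fact u :: real) \<noteq> 0" "(fact (u+j+1) :: real) \<noteq> 0" by simp_all
  have fs: "(fact (Suc t) :: real) = real (Suc t) * fact t" by simp
  have gen: "\<And>A B Cc X Y T sg. A\<noteq>0 \<Longrightarrow> B\<noteq>0 \<Longrightarrow> Cc\<noteq>0 \<Longrightarrow> Y\<noteq>0 \<Longrightarrow> T\<noteq>0 \<Longrightarrow>
     (A*Cc*X)/((T*A)*B*Y) * (sg*B/Cc) = (sg::real)/T*X/Y" by (simp add: field_simps)
  show ?thesis unfolding t
    apply (simp only: diff_Suc_1)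
    apply (subst b1[symmetric], subst b2[symmetric], unfold fs)
    apply (rule gen)
    using nz nz2 by simp_all
qed



theorem proposition2:
  fixes s i j :: nat
  assumes "1 \<le> s" and "s \<le> i" and "i \<le> 2 * s" and "j \<le> s"
  shows "(\<Sum>t = 0..2 * s - i. (-1) ^ t / real (2 * s - t) * real ((2 * s - i) choose t)
            * ((real (2 * s) - real t - 1 - real j) gchoose (s - j)))
       = (-1) ^ (s + i + j) / real i * real (s choose j) / real ((2 * s) choose i)
         + (\<Sum>t = 1..s - j. (-1) ^ (t + 1) / real t
              * ((real i - real j - 1) gchoose (s + t - 1)) * real (s choose (t - 1))
              / real ((s - j) choose t))"
proof -
  define n where "n = 2 * s - i"
  define m where "m = s - j"
  define x where "x = real (2 * s)"
  define K :: real where "K = fact (m+j) / fact m"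
  define L where "L = K * (-1)^m / fact j"
  define coef :: "nat \<Rightarrow> real" where "coef u = (-1)^(m-u+1) * fact u / fact (u+j+1)" for u
  have sm: "s = m + j" using assms m_def by simp
  have nle: "n \<le> s" using assms n_def by simp
  have dec: "((y - real j - 1) gchoose m) / y = K * S j m (y - real j - 1) + L * (1 / y)"
    if "y \<noteq> 0" for y
  proof -
    have "(y - real j - 1 + real j + 1) * S j m (y - real j - 1)
          = fact m / fact (m+j) * ((y - real j - 1) gchoose m) - (-1)^m / fact j"
      by (rule PL)
    then have "y * S j m (y - real j - 1) = ((y - real j - 1) gchoose m) / K - (-1)^m / fact j"
      unfolding K_def by simp
    then show ?thesis using that unfolding L_def K_def by (simp add: field_simps)
  qed
  have LHS: "(\<Sum>t = 0..2 * s - i. (-1) ^ t / real (2 * s - t) * real ((2 * s - i) choose t)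
            * ((real (2 * s) - real t - 1 - real j) gchoose (s - j)))
      = K * D n (\<lambda>y. S j m (y - real j - 1)) x + L * D n (\<lambda>y. 1 / y) x"
  proof -
    have "(\<Sum>t = 0..2 * s - i. (-1) ^ t / real (2 * s - t) * real ((2 * s - i) choose t)
            * ((real (2 * s) - real t - 1 - real j) gchoose (s - j)))
       = (\<Sum>t\<le>n. (-1)^t * real (n choose t) * (K * S j m ((x - real t) - real j - 1)) +
                  L * ((-1)^t * real (n choose t) * (1 / (x - real t))))"
      unfolding n_def[symmetric] m_def[symmetric] atLeast0AtMost
    proof (rule sum.cong[OF refl])
      fix t assume "t \<in> {..n}"
      then have tn: "t \<le> n" by simp
      have xt: "x - real t \<noteq> 0" "real (2*s - t) = x - real t" using tn nle assms unfolding x_def by auto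
      show "(-1) ^ t / real (2 * s - t) * real (n choose t) * ((real (2 * s) - real t - 1 - real j) gchoose m)
         = (-1)^t * real (n choose t) * (K * S j m ((x - real t) - real j - 1)) +
                  L * ((-1)^t * real (n choose t) * (1 / (x - real t)))"
      proof -
        have arg: "real (2*s) - real t - 1 - real j = (x - real t) - real j - 1" by (simp add: x_def)
        have "(-1) ^ t / real (2 * s - t) * real (n choose t) * ((real (2 * s) - real t - 1 - real j) gchoose m)
           = (-1)^t * real (n choose t) * ((((x - real t) - real j - 1) gchoose m) / (x - real t))"
          unfolding xt(2) arg by simp
        also have "\<dots> = (-1)^t * real (n choose t) * (K * S j m ((x - real t) - real j - 1) + L * (1 / (x - real t)))"
          unfolding dec[OF xt(1)] ..
        finally show ?thesis by (simp add: algebra_simps)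
      qed
    qed
    also have "\<dots> = K * D n (\<lambda>y. S j m (y - real j - 1)) x + L * D n (\<lambda>y. 1 / y) x"
      unfolding D_sum by (simp add: sum.distrib sum_distrib_left algebra_simps)
    finally show ?thesis .
  qed
  have ns: "n < 2 * s" using nle assms by simp
  have D1: "D n (\<lambda>y. 1 / y) x = (-1)^n * fact n * fact (i - 1) / fact (2*s)"
  proof -
    have "\<forall>k\<le>n. x \<noteq> real k" using ns unfolding x_def by auto
    from D_inv[OF this] have "D n (\<lambda>y. 1 / y) x = (-1)^n * fact n / (fact (2*s) / fact (2*s - Suc n))"
      using prod_fact[OF ns] unfolding x_def by simp
    moreover have "2*s - Suc n = i - 1" using assms n_def by simp
    ultimately show ?thesis by simp
  qed
  have T1: "L * D n (\<lambda>y. 1 / y) x = (-1) ^ (s + i + j) / real i * real (s choose j) / real ((2 * s) choose i)"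
  proof -
    have c1: "real (s choose j) = fact s / (fact j * fact m)"
      using binomial_fact[OF assms(4)] m_def by simp
    have c2: "real ((2*s) choose i) = fact (2*s) / (fact i * fact n)"
      using binomial_fact[OF assms(3)] n_def by simp
    have fi: "(fact i :: real) = real i * fact (i - 1)"
      using assms by (metis fact_reduce le_trans not_one_le_zero of_nat_fact of_nat_mult zero_less_iff_neq_zero)
    have "s + i + j = m + n + 2 * (i + j - s)" using assms m_def n_def by simp
    then have sg: "(-1::real)^(s+i+j) = (-1)^m * (-1)^n" by (simp add: power_add power_mult)
    have ip: "real i > 0" using assms by simp
    show ?thesis unfolding L_def K_def D1 c1 c2 fi sg sm[symmetric] using ip
      by (simp add: field_simps)
  qed
  have T2: "K * D n (\<lambda>y. S j m (y - real j - 1)) x = (\<Sum>t = 1..s - j. (-1) ^ (t + 1) / real t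
              * ((real i - real j - 1) gchoose (s + t - 1)) * real (s choose (t - 1))
              / real ((s - j) choose t))"
  proof -
    have Sl: "(\<lambda>y. S j m (y - real j - 1)) = (\<lambda>y. \<Sum>u\<in>{..<m}. coef u * ((y - (real j + 1)) gchoose u))"
      unfolding S_def coef_def by (auto simp: algebra_simps)
    have "K * D n (\<lambda>y. S j m (y - real j - 1)) x
        = (\<Sum>u<m. K * coef u * (if n \<le> u then (x - (real j + 1) - real n) gchoose (u - n) else 0))"
      unfolding Sl D_lin D_gchoose by (simp add: sum_distrib_left mult.assoc)
    also have "\<dots> = (\<Sum>u<m. (-1) ^ ((m-u) + 1) / real (m-u)
              * ((real i - real j - 1) gchoose (s + (m-u) - 1)) * real (s choose ((m-u) - 1))
              / real (m choose (m-u)))"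
    proof (rule sum.cong[OF refl])
      fix u assume "u \<in> {..<m}"
      then have um: "u < m" by simp
      define a where "a = i - j - 1"
      have ra: "real i - real j - 1 = real a" "x - (real j + 1) - real n = real a"
        using um assms m_def n_def unfolding a_def x_def by auto
      have ch: "(if n \<le> u then real (a choose (u - n)) else 0) = real (a choose (s + (m-u) - 1))"
      proof (cases "n \<le> u")
        case True
        have "a choose (u - n) = a choose (a - (u - n))"
          by (rule binomial_symmetric) (use True um assms m_def n_def a_def in simp)
        moreover have "a - (u - n) = s + (m-u) - 1" using True um assms m_def n_def a_def by simp
        ultimately show ?thesis using True by simp
      next
        case False
        have "a < s + (m-u) - 1" using False um assms m_def n_def a_def by simp
        then show ?thesis using False by simp
      qed
      have cf: "K * coef u = (-1) ^ ((m-u) + 1) / real (m-u) * real (s choose ((m-u) - 1)) / real (m choose (m-u))"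
        unfolding K_def coef_def sm using coef[OF um, of j] by simp
      show "K * coef u * (if n \<le> u then (x - (real j + 1) - real n) gchoose (u - n) else 0)
          = (-1) ^ ((m-u) + 1) / real (m-u)
              * ((real i - real j - 1) gchoose (s + (m-u) - 1)) * real (s choose ((m-u) - 1))
              / real (m choose (m-u))"
        unfolding ra binomial_gbinomial[symmetric] cf
        using ch by (cases "n \<le> u") (simp_all add: field_simps)
    qed
    also have "\<dots> = (\<Sum>t = 1..m. (-1) ^ (t + 1) / real t
              * ((real i - real j - 1) gchoose (s + t - 1)) * real (s choose (t - 1))
              / real (m choose t))"
      by (rule sum.reindex_bij_witness[of _ "\<lambda>t. m - t" "\<lambda>t. m - t"]) auto
    finally show ?thesis unfolding m_def .
  qed
  show ?thesis using LHS T1 T2 by simp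
qed

end
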